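(* Let $G$ be the graph representation of a schema category and let $F$ be a set of functional dependencies. Let $G_1$ be the first reduced representation (1RR) of $G$ with respect to $F$, and let $\mathcal{R}=\{R_1,\dots,R_p\}$ be the relational schema obtained from $G_1$ by the relational mapping procedure described in the context. Then each relation schema $R_i\in\mathcal{R}$ is in Boyce–Codd normal form (with respect to the functional dependencies implied by the category and $F$).
   Context: Graph representation of a category: a finite directed graph $G$ whose nodes are objects (sets) of three kinds—entity objects, relationship objects and attribute objects—and whose arrows $X\to Y$ are functions, each read as a functional dependency (FD) $X\to Y$. Each relationship object $O$ has a set $\pi(O)$ of projection objects, with a projection arrow $O\to A$ for each $A\in\pi(O)$. The category is thin (at most one arrow between any two objects), so all diagrams commute. Relevant closure $(G,F)^+$: let $FD(G)$ consist of the FD $X\to Y$ for each arrow of $G$ together with, for each relationship object $X$ with projection objects $A_1,\dots,A_n$, the FDs $X\to A_1\cdots A_n$ and $A_1\cdots A_n\to X$; let $D=FD(G)\cup F$. For each left-hand side $X$ of an FD in $D$: if $X$ is not a node of $G$, add it as a node (a composite left-hand side becoming a new node with projection arrows to its components); compute the attribute closure $X^+$ from $D$ using Armstrong's axioms (reflexivity/projection, augmentation, transitivity/composition); for every node $Y$ of $G$ with $Y\in X^+$, add an arrow $X\to Y$ if none exists. A graph $G$ covers $G'$ (w.r.t. $F$) if every arrow of $G'$ is an arrow of $(G,F)^+$; $G$ and $G'$ are equivalent if each covers the other. First reduced representation (1RR): compute $(G,F)^+$; then for each arrow $f$ in turn, remove $f$ if the graph with $f$ deleted is equivalent to the current graph;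 return the resulting graph. Relational mapping: for a node $O$ let $\lambda(O)$ be its name, $outNbr(O)$ the set of nodes $N$ with an arrow $O\to N$, and $bin(O)$ the set of nodes $N$ with arrows both $O\to N$ and $N\to O$. For each not-yet-processed node $O$ having at least one outgoing arrow, create a relation $R$ whose attribute set $sort(R)$ is initially $\{SK\}$ (a surrogate key) if $O$ is an entity or relationship object and $\{\lambda(O)\}$ otherwise; then apply AddNeighbours$(R,O)$: for each $N\in outNbr(O)$, add $\lambda(N)$ to $sort(R)$ (as a foreign key referencing the surrogate key of the relation of $N$ if $N$ is an entity or relationship object), and if $N\in bin(O)$, recursively apply AddNeighbours$(R,N)$ and mark $N$ processed; mark $O$ processed. Finally (cleaning), remove from each relation any surrogate key not referenced by another relation, and remove any relation $R_i$ with $sort(R_i)\subseteq sort(R_j)$ for another relation $R_j$. A relation schema $R$ is in Boyce–Codd normal form (BCNF) if for every nontrivial FD $A\to B$ holding on $R$, $A$ is a superkey of $R$. *)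

theory Defs
  imports Main
begin

text \<open>Nodes: base objects of the original graph (identifiers of type 'a) and
  composite nodes (a set of base objects) created for composite left-hand sides.\<close>
datatype 'a node = Base 'a | Comp "'a set"

datatype kind = Entity | Relationship | Attribute

text \<open>A graph is a pair (node set, arrow set); thin: at most one arrow X \<rightarrow> Y.
  The kind of base objects is given by kd, projection objects of relationship
  objects by pr.  Composite nodes behave like relationship objects w.r.t. FDs
  (projection arrows/FDs to their components) but are neither entity nor
  relationship objects for the relational mapping.\<close>
type_synonym 'a graph = "'a node set \<times> ('a node \<times> 'a node) set"
type_synonym 'a fd = "'a node set \<times> 'a node set"

definition has_projs :: "('a \<Rightarrow> kind) \<Rightarrow> 'a node \<Rightarrow> bool" where
  "has_projs kd N = (case N of Base a \<Rightarrow> kd a = Relationship | Comp S \<Rightarrow> True)"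

definition projs :: "('a \<Rightarrow> 'a set) \<Rightarrow> 'a node \<Rightarrow> 'a node set" where
  "projs pr N = (case N of Base a \<Rightarrow> Base ` pr a | Comp S \<Rightarrow> Base ` S)"

definition is_ent_rel :: "('a \<Rightarrow> kind) \<Rightarrow> 'a node \<Rightarrow> bool" where
  "is_ent_rel kd N = (case N of Base a \<Rightarrow> kd a \<noteq> Attribute | Comp S \<Rightarrow> False)"

text \<open>Attribute closure X^+ of X w.r.t. a set D of FDs (L, R) meaning L \<rightarrow> R;
  this is the closure under Armstrong's axioms.\<close>
inductive_set fd_cl :: "('v set \<times> 'v set) set \<Rightarrow> 'v set \<Rightarrow> 'v set" for D X
  where
    fd_cl_base: "x \<in> X \<Longrightarrow> x \<in> fd_cl D X"
  | fd_cl_step: "(L, R) \<in> D \<Longrightarrow> \<forall>l\<in>L. l \<in> fd_cl D X \<Longrightarrow> y \<in> R \<Longrightarrow> y \<in> fd_cl D X"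

definition FDG :: "('a \<Rightarrow> kind) \<Rightarrow> ('a \<Rightarrow> 'a set) \<Rightarrow> 'a graph \<Rightarrow> 'a fd set" where
  "FDG kd pr G =
     {({x}, {y}) | x y. (x, y) \<in> snd G}
     \<union> {({X}, projs pr X) | X. X \<in> fst G \<and> has_projs kd X}
     \<union> {(projs pr X, {X}) | X. X \<in> fst G \<and> has_projs kd X}"

definition lhs_node :: "'a node set \<Rightarrow> 'a node" where
  "lhs_node L = (if is_singleton L then the_elem L else Comp {a. Base a \<in> L})"

text \<open>Relevant closure (G,F)^+.  New (composite) nodes get projection FDs to their
  components; a node Y is in X^+ if it is derivable from X.\<close>
definition gclosure :: "('a \<Rightarrow> kind) \<Rightarrow> ('a \<Rightarrow> 'a set) \<Rightarrow> 'a fd set \<Rightarrow> 'a graph \<Rightarrow> 'a graph" where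
  "gclosure kd pr F G =
     (let D = FDG kd pr G \<union> F;
          V' = fst G \<union> lhs_node ` fst ` D;
          D' = FDG kd pr (V', snd G) \<union> F
      in (V', snd G \<union> {(lhs_node L, Y) | L Y. L \<in> fst ` D \<and> Y \<in> V' \<and> Y \<in> fd_cl D' L}))"

definition covers :: "('a \<Rightarrow> kind) \<Rightarrow> ('a \<Rightarrow> 'a set) \<Rightarrow> 'a fd set \<Rightarrow> 'a graph \<Rightarrow> 'a graph \<Rightarrow> bool" where
  "covers kd pr F G G' = (snd G' \<subseteq> snd (gclosure kd pr F G))"

definition gequiv :: "('a \<Rightarrow> kind) \<Rightarrow> ('a \<Rightarrow> 'a set) \<Rightarrow> 'a fd set \<Rightarrow> 'a graph \<Rightarrow> 'a graph \<Rightarrow> bool" where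
  "gequiv kd pr F G G' = (covers kd pr F G G' \<and> covers kd pr F G' G)"

definition rr_step :: "('a \<Rightarrow> kind) \<Rightarrow> ('a \<Rightarrow> 'a set) \<Rightarrow> 'a fd set
    \<Rightarrow> 'a graph \<Rightarrow> ('a node \<times> 'a node) \<Rightarrow> 'a graph" where
  "rr_step kd pr F H f =
     (let H' = (fst H, snd H - {f}) in if gequiv kd pr F H' H then H' else H)"

definition first_rr :: "('a \<Rightarrow> kind) \<Rightarrow> ('a \<Rightarrow> 'a set) \<Rightarrow> 'a fd set
    \<Rightarrow> 'a graph \<Rightarrow> ('a node \<times> 'a node) list \<Rightarrow> 'a graph" where
  "first_rr kd pr F G es = foldl (rr_step kd pr F) (gclosure kd pr F G) es"

definition outNbr :: "('a node \<times> 'a node) set \<Rightarrow> 'a node \<Rightarrow> 'a node set" where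
  "outNbr E Ob = {N. (Ob, N) \<in> E}"

definition bin :: "('a node \<times> 'a node) set \<Rightarrow> 'a node \<Rightarrow> 'a node set" where
  "bin E Ob = {N. (Ob, N) \<in> E \<and> (N, Ob) \<in> E}"

text \<open>Nodes visited by the recursive AddNeighbours(R,O).\<close>
inductive_set reach :: "('a node \<times> 'a node) set \<Rightarrow> 'a node \<Rightarrow> 'a node set" for E Ob
  where
    reach_self: "Ob \<in> reach E Ob"
  | reach_bin: "M \<in> reach E Ob \<Longrightarrow> N \<in> bin E M \<Longrightarrow> N \<in> reach E Ob"

text \<open>Relation attributes: SK O is the surrogate key of the relation created from O,
  Nm N is the attribute named lambda(N) (a foreign key if N is an entity/relationship).\<close>
datatype 'a attr = SK "'a node" | Nm "'a node"

definition rel_sort :: "('a \<Rightarrow> kind) \<Rightarrow> ('a node \<times> 'a node) set \<Rightarrow> 'a node \<Rightarrow> 'a attr set" where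
  "rel_sort kd E Ob =
     (if is_ent_rel kd Ob then {SK Ob} else {Nm Ob}) \<union> Nm ` (\<Union>M\<in>reach E Ob. outNbr E M)"

text \<open>A relation before cleaning: (start node, nodes processed by it, attribute set).\<close>
fun map_rels :: "('a \<Rightarrow> kind) \<Rightarrow> ('a node \<times> 'a node) set \<Rightarrow> 'a node list \<Rightarrow> 'a node set
    \<Rightarrow> ('a node \<times> 'a node set \<times> 'a attr set) list" where
  "map_rels kd E [] P = []"
| "map_rels kd E (Ob # os) P =
     (if Ob \<notin> P \<and> outNbr E Ob \<noteq> {}
      then (Ob, reach E Ob, rel_sort kd E Ob) # map_rels kd E os (P \<union> reach E Ob)
      else map_rels kd E os P)"

text \<open>Cleaning: drop unreferenced surrogate keys, then drop relations whose sort is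
  contained in the sort of another relation (of two equal sorts one is kept).\<close>
definition sk_referenced :: "('a \<Rightarrow> kind) \<Rightarrow> ('a node \<times> 'a node set \<times> 'a attr set) list \<Rightarrow> nat \<Rightarrow> bool" where
  "sk_referenced kd rs i = (\<exists>j<length rs. j \<noteq> i \<and>
      (\<exists>N. Nm N \<in> snd (snd (rs ! j)) \<and> is_ent_rel kd N \<and> N \<in> fst (snd (rs ! i))))"

definition clean1 :: "('a \<Rightarrow> kind) \<Rightarrow> ('a node \<times> 'a node set \<times> 'a attr set) list \<Rightarrow> 'a attr set list" where
  "clean1 kd rs = map (\<lambda>i. if sk_referenced kd rs i then snd (snd (rs ! i))
                          else snd (snd (rs ! i)) - {SK (fst (rs ! i))}) [0..<length rs]"

definition clean2 :: "'a attr set list \<Rightarrow> 'a attr set list" where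
  "clean2 ss = map (\<lambda>i. ss ! i)
     (filter (\<lambda>i. \<not> (\<exists>j<length ss. j \<noteq> i \<and> (ss ! i \<subset> ss ! j \<or> (ss ! i = ss ! j \<and> j < i))))
        [0..<length ss])"

definition rel_schema :: "('a \<Rightarrow> kind) \<Rightarrow> 'a graph \<Rightarrow> 'a node list \<Rightarrow> 'a attr set list" where
  "rel_schema kd G ord = clean2 (clean1 kd (map_rels kd (snd G) ord {}))"

text \<open>The node an attribute stands for: SK O denotes (the tuple identifier of) O.\<close>
fun attr_node :: "'a attr \<Rightarrow> 'a node" where
  "attr_node (SK Ob) = Ob"
| "attr_node (Nm N) = N"

definition fd_holds :: "'a fd set \<Rightarrow> 'a attr set \<Rightarrow> 'a attr set \<Rightarrow> bool" where
  "fd_holds D A B = (attr_node ` B \<subseteq> fd_cl D (attr_node ` A))"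

definition bcnf :: "'a fd set \<Rightarrow> 'a attr set \<Rightarrow> bool" where
  "bcnf D R = (\<forall>A B. A \<subseteq> R \<longrightarrow> B \<subseteq> R \<longrightarrow> \<not> B \<subseteq> A \<longrightarrow> fd_holds D A B \<longrightarrow> fd_holds D A R)"

end

theory Submission
  imports Defs
begin

lemma fd_cl_mono_D: "D \<subseteq> D' \<Longrightarrow> fd_cl D X \<subseteq> fd_cl D' X"
proof
  fix x assume d: "D \<subseteq> D'" assume "x \<in> fd_cl D X"
  then show "x \<in> fd_cl D' X"
    by (induction rule: fd_cl.induct) (use d in \<open>auto intro: fd_cl.intros\<close>)
qed

lemma fd_cl_incl: "X \<subseteq> fd_cl D X"
  by (auto intro: fd_cl_base)

lemma fd_cl_trans: "Y \<subseteq> fd_cl D X \<Longrightarrow> fd_cl D Y \<subseteq> fd_cl D X"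
proof
  fix y assume yy: "Y \<subseteq> fd_cl D X" assume "y \<in> fd_cl D Y"
  then show "y \<in> fd_cl D X"
  proof (induction rule: fd_cl.induct)
    case (fd_cl_base x) then show ?case using yy by auto
  next
    case (fd_cl_step L R y) then show ?case by (auto intro: fd_cl.fd_cl_step)
  qed
qed

lemma fd_cl_arrow: "({x},{y}) \<in> D \<Longrightarrow> x \<in> fd_cl D X \<Longrightarrow> y \<in> fd_cl D X"
  by (rule fd_cl_step) auto

lemma fd_cl_empty_aux: "x \<in> fd_cl D X \<Longrightarrow> \<forall>(L,R)\<in>D. L \<noteq> {} \<Longrightarrow> X = {} \<Longrightarrow> False"
  by (induction rule: fd_cl.induct) fastforce+

lemma FDG_arrow: "(x,y) \<in> E \<Longrightarrow> ({x},{y}) \<in> FDG kd pr (V,E)"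
  by (auto simp: FDG_def)

lemma FDG_mono: "V \<subseteq> V' \<Longrightarrow> E \<subseteq> E' \<Longrightarrow> FDG kd pr (V,E) \<subseteq> FDG kd pr (V',E')"
  unfolding FDG_def by auto

lemma gclosure_mono:
  assumes "E \<subseteq> E'"
  shows "snd (gclosure kd pr F (V,E)) \<subseteq> snd (gclosure kd pr F (V,E'))"
proof -
  have D: "FDG kd pr (V,E) \<union> F \<subseteq> FDG kd pr (V,E') \<union> F" using FDG_mono[OF _ assms] by blast
  define V1 where "V1 = V \<union> lhs_node ` fst ` (FDG kd pr (V,E) \<union> F)"
  define V2 where "V2 = V \<union> lhs_node ` fst ` (FDG kd pr (V,E') \<union> F)"
  have V: "V1 \<subseteq> V2" using D unfolding V1_def V2_def by blast
  have D': "FDG kd pr (V1,E) \<union> F \<subseteq> FDG kd pr (V2,E') \<union> F" using FDG_mono[OF V assms] by blast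
  have e: "snd (gclosure kd pr F (V,E)) = E \<union> {(lhs_node L, Y) | L Y. L \<in> fst ` (FDG kd pr (V,E) \<union> F) \<and> Y \<in> V1 \<and> Y \<in> fd_cl (FDG kd pr (V1,E) \<union> F) L}"
    unfolding gclosure_def Let_def V1_def by simp
  have e2: "snd (gclosure kd pr F (V,E')) = E' \<union> {(lhs_node L, Y) | L Y. L \<in> fst ` (FDG kd pr (V,E') \<union> F) \<and> Y \<in> V2 \<and> Y \<in> fd_cl (FDG kd pr (V2,E') \<union> F) L}"
    unfolding gclosure_def Let_def V2_def by simp
  show ?thesis unfolding e e2
  proof
    fix p assume "p \<in> E \<union> {(lhs_node L, Y) | L Y. L \<in> fst ` (FDG kd pr (V,E) \<union> F) \<and> Y \<in> V1 \<and> Y \<in> fd_cl (FDG kd pr (V1,E) \<union> F) L}"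
    then consider "p \<in> E" | L Y where "p = (lhs_node L, Y)" "L \<in> fst ` (FDG kd pr (V,E) \<union> F)" "Y \<in> V1" "Y \<in> fd_cl (FDG kd pr (V1,E) \<union> F) L"
      by blast
    then show "p \<in> E' \<union> {(lhs_node L, Y) | L Y. L \<in> fst ` (FDG kd pr (V,E') \<union> F) \<and> Y \<in> V2 \<and> Y \<in> fd_cl (FDG kd pr (V2,E') \<union> F) L}"
    proof cases
      case 1 then show ?thesis using assms by blast
    next
      case (2 L Y)
      have "L \<in> fst ` (FDG kd pr (V,E') \<union> F)" using 2(2) D by blast
      moreover have "Y \<in> V2" using 2(3) V by blast
      moreover have "Y \<in> fd_cl (FDG kd pr (V2,E') \<union> F) L" using 2(4) fd_cl_mono_D[OF D'] by blast
      ultimately show ?thesis using 2(1) by blast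
    qed
  qed
qed

lemma gclosure_incl: "snd G \<subseteq> snd (gclosure kd pr F G)"
  unfolding gclosure_def Let_def by auto

lemma rr_step_cases: "rr_step kd pr F H f = H \<or> rr_step kd pr F H f = (fst H, snd H - {f})"
  unfolding rr_step_def Let_def by auto

lemma rr_step_keep:
  assumes "f \<in> snd (rr_step kd pr F H f)"
  shows "rr_step kd pr F H f = H \<and> f \<notin> snd (gclosure kd pr F (fst H, snd H - {f}))"
proof -
  have eq: "rr_step kd pr F H f = H" using rr_step_cases[of kd pr F H f] assms by auto
  have fin: "f \<in> snd H" using eq assms by simp
  show ?thesis
  proof (intro conjI eq notI)
    assume a: "f \<in> snd (gclosure kd pr F (fst H, snd H - {f}))"
    have "gequiv kd pr F (fst H, snd H - {f}) H"
      unfolding gequiv_def covers_def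
      using a gclosure_incl[of "(fst H, snd H - {f})" kd pr F] gclosure_incl[of H kd pr F]
      by auto
    then have "rr_step kd pr F H f = (fst H, snd H - {f})" unfolding rr_step_def Let_def by simp
    then show False using assms by simp
  qed
qed

lemma foldl_rr:
  "fst (foldl (rr_step kd pr F) H xs) = fst H \<and> snd (foldl (rr_step kd pr F) H xs) \<subseteq> snd H \<and>
   (\<forall>f\<in>set xs. f \<in> snd (foldl (rr_step kd pr F) H xs) \<longrightarrow>
      f \<notin> snd (gclosure kd pr F (fst H, snd (foldl (rr_step kd pr F) H xs) - {f})))"
proof (induction xs arbitrary: H)
  case Nil then show ?case by simp
next
  case (Cons x xs)
  let ?H1 = "rr_step kd pr F H x"
  have h1: "fst ?H1 = fst H" "snd ?H1 \<subseteq> snd H" using rr_step_cases[of kd pr F H x] by auto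
  let ?R = "foldl (rr_step kd pr F) ?H1 xs"
  have IH: "fst ?R = fst ?H1" "snd ?R \<subseteq> snd ?H1"
    "\<forall>f\<in>set xs. f \<in> snd ?R \<longrightarrow> f \<notin> snd (gclosure kd pr F (fst ?H1, snd ?R - {f}))"
    using Cons.IH[of ?H1] by auto
  have "x \<notin> snd (gclosure kd pr F (fst H, snd ?R - {x}))" if xin: "x \<in> snd ?R"
  proof
    assume a: "x \<in> snd (gclosure kd pr F (fst H, snd ?R - {x}))"
    have "x \<in> snd ?H1" using xin IH by auto
    then have k: "?H1 = H" "x \<notin> snd (gclosure kd pr F (fst H, snd H - {x}))"
      using rr_step_keep by blast+
    have "snd ?R - {x} \<subseteq> snd H - {x}" using IH h1 by auto
    then show False using gclosure_mono[of "snd ?R - {x}" "snd H - {x}" kd pr F "fst H"] a k by auto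
  qed
  then show ?case using IH h1 by auto
qed

lemma reach_fd:
  assumes "\<forall>M0 N. M0 \<in> reach E Ob \<longrightarrow> N \<in> reach E Ob \<longrightarrow> (M0,N) \<in> E \<longrightarrow> ({M0},{N}) \<in> D"
  shows "n \<in> reach E Ob \<Longrightarrow> n \<in> fd_cl D {Ob} \<and> Ob \<in> fd_cl D {n}"
proof (induction rule: reach.induct)
  case reach_self then show ?case by (auto intro: fd_cl_base)
next
  case (reach_bin M N)
  have NR: "N \<in> reach E Ob" using reach_bin reach.reach_bin by blast
  have a1: "(M,N) \<in> E" "(N,M) \<in> E" using reach_bin(2) unfolding bin_def by auto
  have f1: "({M},{N}) \<in> D" "({N},{M}) \<in> D" using assms a1 NR reach_bin(1) by auto
  have "N \<in> fd_cl D {Ob}" using fd_cl_arrow[OF f1(1)] reach_bin.IH by blast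
  moreover have "M \<in> fd_cl D {N}" using fd_cl_arrow[OF f1(2)] fd_cl_base[of N "{N}"] by blast
  then have "Ob \<in> fd_cl D {N}" using fd_cl_trans[of "{M}" D "{N}"] reach_bin.IH by blast
  ultimately show ?case by blast
qed

lemma reach_first: "n \<in> reach E Ob \<Longrightarrow> n \<noteq> Ob \<Longrightarrow> \<exists>N\<in>reach E Ob. (Ob,N) \<in> E"
proof (induction rule: reach.induct)
  case reach_self then show ?case by simp
next
  case (reach_bin M N)
  then show ?case
  proof (cases "M = Ob")
    case True then show ?thesis using reach_bin reach.reach_bin unfolding bin_def by blast
  qed (use reach_bin in auto)
qed

lemma reach_out: "n \<in> reach E Ob \<Longrightarrow> n \<noteq> Ob \<Longrightarrow> \<exists>N\<in>reach E Ob. (n,N) \<in> E"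
  by (erule reach.cases) (auto simp: bin_def)

lemma lhs_node_single[simp]: "lhs_node {x} = x"
  unfolding lhs_node_def by simp

lemma main_contra:
  assumes EV: "E \<subseteq> V \<times> V"
    and red: "\<forall>f\<in>E. f \<notin> snd (gclosure kd pr F (V, E - {f}))"
    and ne: "\<forall>(L,R)\<in>FDG kd pr (V,E) \<union> F. L \<noteq> {}"
    and M: "M \<in> reach E Ob" "(M,b) \<in> E" "b \<notin> reach E Ob"
    and X: "X \<subseteq> insert Ob (\<Union> (outNbr E ` reach E Ob))" "b \<notin> X"
    and bX: "b \<in> fd_cl (FDG kd pr (V,E) \<union> F) X"
  shows "Ob \<in> fd_cl (FDG kd pr (V,E) \<union> F) X"
proof (rule ccontr)
  define D where "D = FDG kd pr (V,E) \<union> F"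
  define Ef where "Ef = E - {(M,b)}"
  define Df where "Df = FDG kd pr (V,Ef) \<union> F"
  assume nO: "Ob \<notin> fd_cl (FDG kd pr (V,E) \<union> F) X"
  then have nO': "Ob \<notin> fd_cl D X" unfolding D_def .
  have bX': "b \<in> fd_cl D X" using bX unfolding D_def .
  have DDf: "D \<subseteq> insert ({M},{b}) Df"
    unfolding D_def Df_def Ef_def FDG_def by auto
  have DfD: "Df \<subseteq> D" unfolding D_def Df_def Ef_def using FDG_mono[of V V "E - {(M,b)}" E] by blast
  have rD: "\<forall>M0 N. M0 \<in> reach E Ob \<longrightarrow> N \<in> reach E Ob \<longrightarrow> (M0,N) \<in> E \<longrightarrow> ({M0},{N}) \<in> D"
    unfolding D_def using FDG_arrow by blast
  have rDf: "\<forall>M0 N. M0 \<in> reach E Ob \<longrightarrow> N \<in> reach E Ob \<longrightarrow> (M0,N) \<in> E \<longrightarrow> ({M0},{N}) \<in> Df"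
  proof (intro allI impI)
    fix M0 N assume "M0 \<in> reach E Ob" "N \<in> reach E Ob" "(M0,N) \<in> E"
    then have "(M0,N) \<in> Ef" unfolding Ef_def using M(3) by auto
    then show "({M0},{N}) \<in> Df" unfolding Df_def using FDG_arrow by blast
  qed
  have MO: "Ob \<in> fd_cl D {M}" using reach_fd[OF rD M(1)] by blast
  have nM: "M \<notin> fd_cl D X"
  proof
    assume "M \<in> fd_cl D X"
    then have "fd_cl D {M} \<subseteq> fd_cl D X" using fd_cl_trans[of "{M}" D X] by blast
    then show False using MO nO' by blast
  qed
  have cl: "fd_cl D X \<subseteq> fd_cl Df X"
  proof
    fix y assume "y \<in> fd_cl D X"
    then show "y \<in> fd_cl Df X"
    proof (induction rule: fd_cl.induct)
      case (fd_cl_base x) then show ?case by (rule fd_cl.fd_cl_base)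
    next
      case (fd_cl_step L R y)
      show ?case
      proof (cases "(L,R) = ({M},{b})")
        case True
        have "\<forall>l\<in>L. l \<in> fd_cl D X" using fd_cl_step by blast
        then show ?thesis using True nM by auto
      next
        case False
        then have LR: "(L,R) \<in> Df" using fd_cl_step.hyps(1) DDf by blast
        have ih: "\<forall>l\<in>L. l \<in> fd_cl Df X" using fd_cl_step by auto
        have yR: "y \<in> R" using fd_cl_step by simp
        show ?thesis by (rule fd_cl.fd_cl_step[OF LR ih yR])
      qed
    qed
  qed
  have MOf: "Ob \<in> fd_cl Df {M}" using reach_fd[OF rDf M(1)] by blast
  have XM: "X \<subseteq> fd_cl Df {M}"
  proof
    fix x assume xX: "x \<in> X"
    show "x \<in> fd_cl Df {M}"
    proof (cases "x = Ob")
      case True then show ?thesis using MOf by simp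
    next
      case False
      then obtain M' where M': "M' \<in> reach E Ob" "(M',x) \<in> E" using X xX unfolding outNbr_def by blast
      have "x \<noteq> b" using xX X(2) by blast
      then have "(M',x) \<in> Ef" using M' unfolding Ef_def by auto
      then have a: "({M'},{x}) \<in> Df" unfolding Df_def using FDG_arrow by blast
      have "M' \<in> fd_cl Df {Ob}" using reach_fd[OF rDf M'(1)] by blast
      also have "fd_cl Df {Ob} \<subseteq> fd_cl Df {M}" using fd_cl_trans[of "{Ob}" Df "{M}"] MOf by blast
      finally show ?thesis using fd_cl_arrow[OF a] by blast
    qed
  qed
  have bM: "b \<in> fd_cl Df {M}" using cl bX' fd_cl_trans[OF XM] by blast
  have "\<exists>N. (M,N) \<in> Ef"
  proof (rule ccontr)
    assume no: "\<not> (\<exists>N. (M,N) \<in> Ef)"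
    have inEf: "(u,v) \<in> E \<Longrightarrow> v \<in> reach E Ob \<Longrightarrow> (u,v) \<in> Ef" for u v
      unfolding Ef_def using M(3) by auto
    have MO: "M = Ob"
    proof (rule ccontr)
      assume "M \<noteq> Ob"
      then obtain N where "N \<in> reach E Ob" "(M,N) \<in> E" using reach_out[OF M(1)] by blast
      then show False using no inEf by blast
    qed
    have rO: "reach E Ob = {Ob}"
    proof
      show "reach E Ob \<subseteq> {Ob}"
      proof
        fix n assume n: "n \<in> reach E Ob"
        show "n \<in> {Ob}"
        proof (rule ccontr)
          assume "n \<notin> {Ob}"
          then obtain N where "N \<in> reach E Ob" "(Ob,N) \<in> E" using reach_first[OF n] by blast
          then show False using no inEf MO by blast
        qed
      qed
    qed (auto intro: reach.intros)
    have "X = {}"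
    proof (rule ccontr)
      assume "X \<noteq> {}"
      then obtain x where xX: "x \<in> X" by blast
      show False
      proof (cases "x = Ob")
        case True then show False using xX nO' fd_cl_incl[of X D] by auto
      next
        case False
        then have "(Ob,x) \<in> E" using X(1) xX rO unfolding outNbr_def by auto
        moreover have "x \<noteq> b" using xX X(2) by blast
        ultimately show False using no MO unfolding Ef_def by auto
      qed
    qed
    then show False using bX' fd_cl_empty_aux[of b D X] ne unfolding D_def by blast
  qed
  then obtain N where MN: "(M,N) \<in> Ef" by blast
  define V1 where "V1 = V \<union> lhs_node ` fst ` Df"
  have e: "snd (gclosure kd pr F (V,Ef)) = Ef \<union> {(lhs_node L, Y) | L Y. L \<in> fst ` Df \<and> Y \<in> V1 \<and> Y \<in> fd_cl (FDG kd pr (V1,Ef) \<union> F) L}"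
    unfolding gclosure_def Let_def V1_def Df_def by simp
  have L: "{M} \<in> fst ` Df" using FDG_arrow[OF MN, of kd pr V] unfolding Df_def by force
  have bV: "b \<in> V1" using EV M(2) unfolding V1_def by blast
  have "Df \<subseteq> FDG kd pr (V1,Ef) \<union> F" unfolding Df_def V1_def using FDG_mono[of V _ Ef Ef kd pr] by blast
  then have "b \<in> fd_cl (FDG kd pr (V1,Ef) \<union> F) {M}" using bM fd_cl_mono_D by blast
  then have "(lhs_node {M}, b) \<in> snd (gclosure kd pr F (V,Ef))" unfolding e using L bV by blast
  then show False using red M(2) unfolding Ef_def by simp
qed

lemma rel_sort_nodes: "attr_node ` rel_sort kd E Ob \<subseteq> insert Ob (\<Union> (outNbr E ` reach E Ob))"
  unfolding rel_sort_def by auto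

lemma bcnf_rel:
  assumes EV: "E \<subseteq> V \<times> V"
    and red: "\<forall>f\<in>E. f \<notin> snd (gclosure kd pr F (V, E - {f}))"
    and ne: "\<forall>(L,R)\<in>FDG kd pr (V,E) \<union> F. L \<noteq> {}"
    and R: "rel_sort kd E Ob - {SK Ob} \<subseteq> R" "R \<subseteq> rel_sort kd E Ob"
  shows "bcnf (FDG kd pr (V,E) \<union> F) R"
  unfolding bcnf_def fd_holds_def
proof (intro allI impI)
  fix A B
  assume AR: "A \<subseteq> R" and BR: "B \<subseteq> R" and BA: "\<not> B \<subseteq> A"
    and AB: "attr_node ` B \<subseteq> fd_cl (FDG kd pr (V,E) \<union> F) (attr_node ` A)"
  define D where "D = FDG kd pr (V,E) \<union> F"
  define XA where "XA = attr_node ` A"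
  have rD: "\<forall>M0 N. M0 \<in> reach E Ob \<longrightarrow> N \<in> reach E Ob \<longrightarrow> (M0,N) \<in> E \<longrightarrow> ({M0},{N}) \<in> D"
    unfolding D_def using FDG_arrow by blast
  have Ocl: "insert Ob (\<Union> (outNbr E ` reach E Ob)) \<subseteq> fd_cl D {Ob}"
  proof
    fix n assume n: "n \<in> insert Ob (\<Union> (outNbr E ` reach E Ob))"
    show "n \<in> fd_cl D {Ob}"
    proof (cases "n = Ob")
      case True then show ?thesis by (simp add: fd_cl_base)
    next
      case False
      then obtain M where M: "M \<in> reach E Ob" "(M,n) \<in> E" using n unfolding outNbr_def by blast
      have a: "({M},{n}) \<in> D" unfolding D_def using FDG_arrow[OF M(2)] by blast
      show ?thesis using fd_cl_arrow[OF a] reach_fd[OF rD M(1)] by blast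
    qed
  qed
  have XAs: "XA \<subseteq> insert Ob (\<Union> (outNbr E ` reach E Ob))"
    unfolding XA_def using AR R(2) rel_sort_nodes[of kd E Ob] by blast
  have key: "Ob \<in> fd_cl D XA"
  proof -
    obtain b where b: "b \<in> B" "b \<notin> A" using BA by blast
    have bcl: "attr_node b \<in> fd_cl D XA" using AB b unfolding D_def XA_def by blast
    have bR: "b \<in> rel_sort kd E Ob" using b BR R by blast
    show ?thesis
    proof (cases "attr_node b = Ob")
      case True then show ?thesis using bcl by simp
    next
      case False
      then obtain nb M where nb: "b = Nm nb" "M \<in> reach E Ob" "(M,nb) \<in> E"
        using bR unfolding rel_sort_def outNbr_def by (auto split: if_splits)
      have nbO: "nb \<noteq> Ob" using False nb by simp
      have nbX: "nb \<notin> XA"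
      proof
        assume "nb \<in> XA"
        then obtain a where a: "a \<in> A" "attr_node a = nb" unfolding XA_def by blast
        have "a \<in> rel_sort kd E Ob" using a AR R by blast
        then show False using a b nb nbO unfolding rel_sort_def by (auto split: if_splits)
      qed
      show ?thesis
      proof (cases "nb \<in> reach E Ob")
        case True
        have "Ob \<in> fd_cl D {nb}" using reach_fd[OF rD True] by blast
        moreover have "fd_cl D {nb} \<subseteq> fd_cl D XA" using fd_cl_trans[of "{nb}" D XA] bcl nb by simp
        ultimately show ?thesis by blast
      next
        case False
        show ?thesis
          using main_contra[OF EV red ne nb(2) nb(3) False XAs nbX] bcl nb unfolding D_def by simp
      qed
    qed
  qed
  have "attr_node ` R \<subseteq> fd_cl D {Ob}" using R(2) rel_sort_nodes[of kd E Ob] Ocl by blast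
  also have "fd_cl D {Ob} \<subseteq> fd_cl D XA" using fd_cl_trans[of "{Ob}" D XA] key by simp
  finally show "attr_node ` R \<subseteq> fd_cl (FDG kd pr (V,E) \<union> F) (attr_node ` A)"
    unfolding D_def XA_def .
qed

lemma map_rels_form: "r \<in> set (map_rels kd E os P) \<Longrightarrow> \<exists>Ob. r = (Ob, reach E Ob, rel_sort kd E Ob)"
  by (induction os arbitrary: P) (auto split: if_splits)

lemma clean1_form: "s \<in> set (clean1 kd rs) \<Longrightarrow>
   \<exists>r\<in>set rs. s = snd (snd r) \<or> s = snd (snd r) - {SK (fst r)}"
  unfolding clean1_def by auto

lemma clean2_sub: "set (clean2 ss) \<subseteq> set ss"
  unfolding clean2_def by auto

lemma lhs0:
  assumes "E0 \<subseteq> Base ` V0 \<times> Base ` V0"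
    and "\<forall>r\<in>V0. kd r = Relationship \<longrightarrow> pr r \<noteq> {} \<and> pr r \<subseteq> V0 \<and> (\<forall>p\<in>pr r. (Base r, Base p) \<in> E0)"
    and "\<forall>(L, R)\<in>F. L \<noteq> {} \<and> L \<subseteq> Base ` V0 \<and> R \<subseteq> Base ` V0"
    and "L \<in> fst ` (FDG kd pr (Base ` V0, E0) \<union> F)"
  shows "L \<noteq> {} \<and> L \<subseteq> Base ` V0"
proof -
  obtain R where LR: "(L,R) \<in> FDG kd pr (Base ` V0, E0) \<union> F" using assms(4) by force
  show ?thesis
  proof (cases "(L,R) \<in> F")
    case True then show ?thesis using assms(3) by blast
  next
    case False
    then have "(L,R) \<in> FDG kd pr (Base ` V0, E0)" using LR by blast
    then consider x y where "L = {x}" "(x,y) \<in> E0" | X where "L = {X}" "X \<in> Base ` V0"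
      | X where "L = projs pr X" "X \<in> Base ` V0" "has_projs kd X"
      unfolding FDG_def by auto
    then show ?thesis
    proof cases
      case 1 then show ?thesis using assms(1) by blast
    next
      case 2 then show ?thesis by blast
    next
      case 3
      then obtain a where a: "X = Base a" "a \<in> V0" by blast
      then have "kd a = Relationship" using 3(3) unfolding has_projs_def by simp
      then have "pr a \<noteq> {}" "pr a \<subseteq> V0" using assms(2) a(2) by auto
      then show ?thesis using 3(1) a(1) unfolding projs_def by auto
    qed
  qed
qed

lemma lhs_node_form: "L \<noteq> {} \<Longrightarrow> L \<subseteq> Base ` V0 \<Longrightarrow> lhs_node L \<in> Base ` V0 \<or> (\<exists>S. S \<noteq> {} \<and> lhs_node L = Comp S)"
  unfolding lhs_node_def is_singleton_def by auto

lemma V_proj: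
  assumes "E0 \<subseteq> Base ` V0 \<times> Base ` V0"
    and pr0: "\<forall>r\<in>V0. kd r = Relationship \<longrightarrow> pr r \<noteq> {} \<and> pr r \<subseteq> V0 \<and> (\<forall>p\<in>pr r. (Base r, Base p) \<in> E0)"
    and "\<forall>(L, R)\<in>F. L \<noteq> {} \<and> L \<subseteq> Base ` V0 \<and> R \<subseteq> Base ` V0"
    and X: "X \<in> fst (gclosure kd pr F (Base ` V0, E0))" "has_projs kd X"
  shows "projs pr X \<noteq> {}"
proof -
  have "X \<in> Base ` V0 \<or> (\<exists>S. S \<noteq> {} \<and> X = Comp S)"
  proof -
    have "X \<in> Base ` V0 \<union> lhs_node ` fst ` (FDG kd pr (Base ` V0, E0) \<union> F)"
      using X(1) unfolding gclosure_def Let_def by simp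
    then show ?thesis
    proof
      assume "X \<in> lhs_node ` fst ` (FDG kd pr (Base ` V0, E0) \<union> F)"
      then obtain L where L: "X = lhs_node L" "L \<in> fst ` (FDG kd pr (Base ` V0, E0) \<union> F)" by blast
      have "L \<noteq> {} \<and> L \<subseteq> Base ` V0" by (rule lhs0[OF assms(1-3) L(2)])
      then show ?thesis using lhs_node_form[of L V0] L(1) by blast
    qed simp
  qed
  then show ?thesis
  proof
    assume "X \<in> Base ` V0"
    then obtain a where a: "X = Base a" "a \<in> V0" by blast
    then have "kd a = Relationship" using X(2) unfolding has_projs_def by simp
    then have "pr a \<noteq> {}" using pr0 a(2) by auto
    then show ?thesis using a(1) unfolding projs_def by simp
  next
    assume "\<exists>S. S \<noteq> {} \<and> X = Comp S"
    then show ?thesis unfolding projs_def by auto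
  qed
qed

theorem theorem7p1:
  fixes kd :: "'a \<Rightarrow> kind" and pr :: "'a \<Rightarrow> 'a set"
    and V0 :: "'a set" and E0 :: "('a node \<times> 'a node) set"
    and F :: "'a fd set"
    and es :: "('a node \<times> 'a node) list" and ord :: "'a node list"
  assumes "finite V0"
    and "E0 \<subseteq> Base ` V0 \<times> Base ` V0"
    and "\<forall>r\<in>V0. kd r = Relationship \<longrightarrow>
           pr r \<noteq> {} \<and> pr r \<subseteq> V0 \<and> (\<forall>p\<in>pr r. (Base r, Base p) \<in> E0)"
    and "finite F"
    and "\<forall>(L, R)\<in>F. L \<noteq> {} \<and> L \<subseteq> Base ` V0 \<and> R \<subseteq> Base ` V0"
    and "distinct es" and "set es = snd (gclosure kd pr F (Base ` V0, E0))"
    and "distinct ord" and "set ord = fst (first_rr kd pr F (Base ` V0, E0) es)"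
  shows "\<forall>R \<in> set (rel_schema kd (first_rr kd pr F (Base ` V0, E0) es) ord).
           bcnf (FDG kd pr (first_rr kd pr F (Base ` V0, E0) es) \<union> F) R"
proof
  fix R assume Rin: "R \<in> set (rel_schema kd (first_rr kd pr F (Base ` V0, E0) es) ord)"
  define GC where "GC = gclosure kd pr F (Base ` V0, E0)"
  define G1 where "G1 = first_rr kd pr F (Base ` V0, E0) es"
  define V where "V = fst GC"
  define E where "E = snd G1"
  have fr: "fst G1 = V \<and> E \<subseteq> snd GC \<and>
     (\<forall>f\<in>set es. f \<in> E \<longrightarrow> f \<notin> snd (gclosure kd pr F (V, E - {f})))"
    using foldl_rr[of kd pr F GC es] unfolding G1_def first_rr_def E_def V_def GC_def by simp
  have G1eq: "G1 = (V, E)"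
  proof -
    have "G1 = (fst G1, snd G1)" by simp
    then show ?thesis using fr unfolding E_def by simp
  qed
  have GCV: "snd GC \<subseteq> V \<times> V"
  proof -
    define D0 where "D0 = FDG kd pr (Base ` V0, E0) \<union> F"
    have Veq: "V = Base ` V0 \<union> lhs_node ` fst ` D0"
      unfolding V_def GC_def gclosure_def Let_def D0_def by simp
    have "snd GC = E0 \<union> {(lhs_node L, Y) | L Y. L \<in> fst ` D0 \<and> Y \<in> V \<and> Y \<in> fd_cl (FDG kd pr (V, E0) \<union> F) L}"
      unfolding GC_def gclosure_def Let_def D0_def Veq by simp
    then have "snd GC \<subseteq> E0 \<union> {(lhs_node L, Y) | L Y. L \<in> fst ` D0 \<and> Y \<in> V}"
      by blast
    then show ?thesis using assms(2) Veq by blast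
  qed
  have EV: "E \<subseteq> V \<times> V" using fr GCV by blast
  have red: "\<forall>f\<in>E. f \<notin> snd (gclosure kd pr F (V, E - {f}))"
    using fr assms(7) unfolding GC_def by blast
  have ne: "\<forall>(L,R)\<in>FDG kd pr (V,E) \<union> F. L \<noteq> {}"
  proof -
    have pj: "projs pr X \<noteq> {}" if "X \<in> V" "has_projs kd X" for X
      using V_proj[OF assms(2,3,5)] that unfolding V_def GC_def by blast
    show ?thesis
    proof (intro ballI)
      fix p assume p: "p \<in> FDG kd pr (V,E) \<union> F"
      show "case p of (L,R) \<Rightarrow> L \<noteq> {}"
      proof (cases "p \<in> F")
        case True then show ?thesis using assms(5) by auto
      next
        case False
        then have "p \<in> FDG kd pr (V,E)" using p by blast
        then consider x y where "p = ({x},{y})" | X where "p = ({X}, projs pr X)"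
          | X where "p = (projs pr X, {X})" "X \<in> V" "has_projs kd X"
          unfolding FDG_def by auto
        then show ?thesis
        proof cases
          case 3 then show ?thesis using pj[OF 3(2,3)] by simp
        qed auto
      qed
    qed
  qed
  have "R \<in> set (rel_schema kd G1 ord)" using Rin unfolding G1_def .
  then have "R \<in> set (clean2 (clean1 kd (map_rels kd E ord {})))"
    unfolding rel_schema_def E_def .
  then have "R \<in> set (clean1 kd (map_rels kd E ord {}))"
    using clean2_sub by blast
  then obtain r where r: "r \<in> set (map_rels kd E ord {})"
    "R = snd (snd r) \<or> R = snd (snd r) - {SK (fst r)}" using clean1_form by blast
  obtain Ob where "r = (Ob, reach E Ob, rel_sort kd E Ob)" using map_rels_form[OF r(1)] by blast
  then have "rel_sort kd E Ob - {SK Ob} \<subseteq> R" "R \<subseteq> rel_sort kd E Ob" using r(2) by auto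
  then have "bcnf (FDG kd pr (V,E) \<union> F) R" using bcnf_rel[OF EV red ne] by blast
  then show "bcnf (FDG kd pr (first_rr kd pr F (Base ` V0, E0) es) \<union> F) R"
    using G1eq unfolding G1_def by simp
qed

end
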